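(* Under the hypotheses of the preceding proposition (with $A$, $f$, $E\oplus F$, $\mathcal E$ as there), for every $\varepsilon>0$ there is $M>0$ such that for all $x\in\mathbb{R}^d$ and all $y\in\mathcal E(x)$ with $\|x-y\|>M$, $$\|\pi^u_A(x-y)\|<\varepsilon\,\|\pi^s_A(x-y)\|,$$ where $\pi^s_A$ is the projection onto $E^s_A$ along $E^u_A$ and $\pi^u_A$ the projection onto $E^u_A$ along $E^s_A$. In particular $\frac{x-y}{\|x-y\|}$ approaches $E^s_A$ uniformly as $\|x-y\|\to\infty$ with $y\in\mathcal E(x)$.
   Context: Hypotheses: $A$ linear Anosov on $\mathbb{T}^d$ with splitting $E^s_A\oplus E^u_A$, $d_s=\dim E^s_A$, adapted norm with $E^s_A\perp E^u_A$, $\|A|_{E^s_A}\|\le\lambda<1<\gamma\le m(A|_{E^u_A})$ where $m(T)=\|T^{-1}\|^{-1}$; $f$ a diffeomorphism of $\mathbb{T}^d$ homotopic to $A$ with a dominated splitting $E\oplus F$ (continuous, $Df$-invariant, $\|Df^n|_{E(x)}\|\,\|Df^{-n}|_{F(f^nx)}\|\le C\nu^n$, $0<\nu<1$), $\dim E=d_s$, $\dim F=d_u$, $\|Df|_E\|\le\hat\gamma<\gamma$, $m(Df|_F)\ge\hat\lambda>\lambda$, with $E,F$ integrable; $\mathcal E$ is the lift to $\mathbb{R}^d$ of the foliation tangent to $E$. *)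

theory Defs
  imports "HOL-Analysis.Analysis"
begin

definition qnorm :: "real^'n^'n \<Rightarrow> real^'n \<Rightarrow> real" where
  "qnorm Q v = sqrt (v \<bullet> (Q *v v))"

definition pos_def_sym :: "real^'n^'n \<Rightarrow> bool" where
  "pos_def_sym Q \<longleftrightarrow> transpose Q = Q \<and> (\<forall>v. v \<noteq> 0 \<longrightarrow> v \<bullet> (Q *v v) > 0)"

(* integer vectors (deck transformations of R^d -> T^d) *)
definition int_vec :: "real^'n \<Rightarrow> bool" where
  "int_vec k \<longleftrightarrow> (\<forall>i. k $ i \<in> \<int>)"

(* projection onto S along T (for a direct sum S + T = R^d) *)
definition proj_along :: "(real^'n) set \<Rightarrow> (real^'n) set \<Rightarrow> real^'n \<Rightarrow> real^'n" where
  "proj_along S T v = (THE s. s \<in> S \<and> v - s \<in> T)"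

fun dpow :: "(real^'n \<Rightarrow> real^'n \<Rightarrow> real^'n) \<Rightarrow> (real^'n \<Rightarrow> real^'n) \<Rightarrow> nat
             \<Rightarrow> real^'n \<Rightarrow> real^'n \<Rightarrow> real^'n" where
  "dpow DF F 0 x = id"
| "dpow DF F (Suc n) x = DF ((F ^^ n) x) \<circ> dpow DF F n x"

(* continuity of a field of subspaces (gap / Hausdorff distance of unit balls) *)
definition continuous_distribution :: "(real^'n \<Rightarrow> (real^'n) set) \<Rightarrow> bool" where
  "continuous_distribution E \<longleftrightarrow>
     (\<forall>x. \<forall>e>0. \<exists>d>0. \<forall>y. dist y x < d \<longrightarrow>
        (\<forall>v\<in>E x. norm v \<le> 1 \<longrightarrow> (\<exists>w\<in>E y. dist v w < e)) \<and>
        (\<forall>w\<in>E y. norm w \<le> 1 \<longrightarrow> (\<exists>v\<in>E x. dist v w < e)))"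

(* foliation charts: U open, h a homeomorphism of U onto an open convex set, plaques are the
   preimages of the affine slices parallel to L (dim L = k); the inverse chart restricted to
   the slices is C^1 with tangent spaces given by E *)
definition fol_chart :: "(real^'n \<Rightarrow> (real^'n) set) \<Rightarrow> nat
      \<Rightarrow> (real^'n) set \<times> (real^'n \<Rightarrow> real^'n) \<times> (real^'n) set \<Rightarrow> bool" where
  "fol_chart E k c \<longleftrightarrow> (case c of (U, h, L) \<Rightarrow>
      open U \<and> U \<noteq> {} \<and> continuous_on U h \<and> inj_on h U \<and> open (h ` U) \<and> convex (h ` U) \<and>
      continuous_on (h ` U) (inv_into U h) \<and> subspace L \<and> dim L = k \<and>
      (\<exists>D. \<forall>v\<in>h ` U.
          (inv_into U h has_derivative D v) (at v within ((\<lambda>l. v + l) ` L)) \<and>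
          inj_on (D v) L \<and> D v ` L = E (inv_into U h v) \<and>
          (\<forall>l\<in>L. continuous_on (h ` U) (\<lambda>w. D w l))))"

definition plaque :: "(real^'n) set \<times> (real^'n \<Rightarrow> real^'n) \<times> (real^'n) set \<Rightarrow> real^'n \<Rightarrow> (real^'n) set" where
  "plaque c u = (case c of (U, h, L) \<Rightarrow> {w\<in>U. h w - h u \<in> L})"

(* W is the leaf map of a foliation of R^d by k-dimensional C^1 leaves tangent to E:
   a coherent foliated atlas, and W x is the leaf through x (plaque-chain class of x) *)
definition foliation_tangent :: "(real^'n \<Rightarrow> (real^'n) set) \<Rightarrow> nat \<Rightarrow> (real^'n \<Rightarrow> (real^'n) set) \<Rightarrow> bool" where
  "foliation_tangent E k W \<longleftrightarrow>
     (\<exists>\<A>. (\<forall>c\<in>\<A>. fol_chart E k c) \<and> (\<forall>p. \<exists>c\<in>\<A>. p \<in> fst c) \<and>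
        (\<forall>c1\<in>\<A>. \<forall>c2\<in>\<A>. \<forall>u \<in> fst c1 \<inter> fst c2.
            \<exists>N. open N \<and> u \<in> N \<and> plaque c1 u \<inter> N = plaque c2 u \<inter> N) \<and>
        (\<forall>x. W x = \<Inter>{S. x \<in> S \<and> (\<forall>c\<in>\<A>. \<forall>u\<in>S \<inter> fst c. plaque c u \<subseteq> S)}))"

(* lift of a foliation of the torus: invariant under integer translations *)
definition periodic_leaves :: "(real^'n \<Rightarrow> (real^'n) set) \<Rightarrow> bool" where
  "periodic_leaves W \<longleftrightarrow> (\<forall>x k. int_vec k \<longrightarrow> W (x + k) = (\<lambda>y. y + k) ` W x)"

end

theory Submission
  imports Defs
begin


lemma qf_sym: assumes "pos_def_sym Q" shows "u \<bullet> (Q *v v) = v \<bullet> (Q *v u)"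
proof -
  have "u \<bullet> (Q *v v) = (u v* Q) \<bullet> v" by (simp add: dot_lmul_matrix)
  also have "u v* Q = u v* transpose Q" using assms by (simp add: pos_def_sym_def)
  also have "\<dots> = Q *v u" by simp
  finally show ?thesis by (simp add: inner_commute)
qed

lemma qf_nonneg: assumes "pos_def_sym Q" shows "0 \<le> v \<bullet> (Q *v v)"
proof (cases "v = 0")
  case False then show ?thesis using assms unfolding pos_def_sym_def by (auto intro: less_imp_le)
qed simp

lemma qf_add: assumes "pos_def_sym Q"
  shows "(u + v) \<bullet> (Q *v (u + v)) = u \<bullet> (Q *v u) + 2 * (u \<bullet> (Q *v v)) + v \<bullet> (Q *v v)"
  using qf_sym[OF assms, of v u] by (simp add: matrix_vector_right_distrib inner_add_left inner_add_right)

lemma qf_scale: fixes Q :: "real^'n^'n" shows "(c *\<^sub>R u) \<bullet> (Q *v (c *\<^sub>R v)) = c * c * (u \<bullet> (Q *v v))"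
  by (simp add: matrix_vector_mult_scaleR)

lemma qn_sq: assumes "pos_def_sym Q" shows "qnorm Q v ^ 2 = v \<bullet> (Q *v v)"
  unfolding qnorm_def by (rule real_sqrt_pow2[OF qf_nonneg[OF assms]])

lemma qn_nonneg: assumes "pos_def_sym Q" shows "0 \<le> qnorm Q v"
  using qf_nonneg[OF assms] by (simp add: qnorm_def)

lemma qf_CS: assumes Q: "pos_def_sym Q"
  shows "(u \<bullet> (Q *v v))^2 \<le> (u \<bullet> (Q *v u)) * (v \<bullet> (Q *v v))"
proof -
  define a where "a = u \<bullet> (Q *v u)"
  define b where "b = v \<bullet> (Q *v v)"
  define c where "c = u \<bullet> (Q *v v)"
  have key: "0 \<le> a + 2 * t * c + t * t * b" for t
  proof -
    have "0 \<le> (u + t *\<^sub>R v) \<bullet> (Q *v (u + t *\<^sub>R v))" by (rule qf_nonneg[OF Q])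
    also have "\<dots> = a + 2 * t * c + t * t * b"
      unfolding qf_add[OF Q] a_def b_def c_def
      using qf_scale[of t v Q v]
      by (simp add: matrix_vector_mult_scaleR)
    finally show ?thesis .
  qed
  have a0: "0 \<le> a" "0 \<le> b" using qf_nonneg[OF Q] a_def b_def by auto
  show ?thesis
  proof (cases "b = 0")
    case True
    have "c = 0"
    proof (rule ccontr)
      assume "c \<noteq> 0"
      have "0 \<le> a + 2 * (- (a + 1) / (2 * c)) * c" using key[of "- (a + 1) / (2 * c)"] True by simp
      also have "\<dots> = -1" using \<open>c \<noteq> 0\<close> by (simp add: field_simps)
      finally show False by simp
    qed
    then show ?thesis using True a_def b_def c_def by simp
  next
    case False
    then have bp: "b > 0" using a0 by simp
    have "0 \<le> a + 2 * (- c / b) * c + (- c / b) * (- c / b) * b" by (rule key)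
    also have "\<dots> = a - c^2 / b" using bp by (simp add: field_simps power2_eq_square)
    finally have "c^2 / b \<le> a" by simp
    then have "c^2 \<le> a * b" using bp by (simp add: divide_le_eq)
    then show ?thesis by (simp add: a_def b_def c_def)
  qed
qed

lemma qn_CS: assumes Q: "pos_def_sym Q"
  shows "\<bar>u \<bullet> (Q *v v)\<bar> \<le> qnorm Q u * qnorm Q v"
proof -
  have "\<bar>u \<bullet> (Q *v v)\<bar> = sqrt ((u \<bullet> (Q *v v))^2)" by simp
  also have "\<dots> \<le> sqrt ((u \<bullet> (Q *v u)) * (v \<bullet> (Q *v v)))"
    using qf_CS[OF Q] real_sqrt_le_mono by blast
  also have "\<dots> = qnorm Q u * qnorm Q v" by (simp add: qnorm_def real_sqrt_mult)
  finally show ?thesis .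
qed

lemma qn_triangle: assumes Q: "pos_def_sym Q"
  shows "qnorm Q (u + v) \<le> qnorm Q u + qnorm Q v"
proof -
  have "qnorm Q (u + v) ^ 2 = qnorm Q u ^ 2 + 2 * (u \<bullet> (Q *v v)) + qnorm Q v ^ 2"
    using qf_add[OF Q] qn_sq[OF Q] by simp
  also have "\<dots> \<le> (qnorm Q u + qnorm Q v) ^ 2"
    using qn_CS[OF Q, of u v] by (simp add: power2_eq_square algebra_simps)
  finally show ?thesis
    using qn_nonneg[OF Q] power2_le_imp_le by (metis add_nonneg_nonneg)
qed

lemma qn_scale: fixes Q :: "real^'n^'n" shows "qnorm Q (c *\<^sub>R v) = \<bar>c\<bar> * qnorm Q v"
proof -
  have "qnorm Q (c *\<^sub>R v) = sqrt ((c * c) * (v \<bullet> (Q *v v)))"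
    unfolding qnorm_def qf_scale ..
  also have "\<dots> = \<bar>c\<bar> * qnorm Q v" by (simp add: qnorm_def real_sqrt_mult)
  finally show ?thesis .
qed

lemma qn_minus: fixes Q :: "real^'n^'n" shows "qnorm Q (- v) = qnorm Q v"
  using qn_scale[of Q "-1" v] by simp

lemma qn_diff_comm: fixes Q :: "real^'n^'n" shows "qnorm Q (u - v) = qnorm Q (v - u)"
  using qn_minus[of Q "v - u"] by simp

lemma qn_zero[simp]: "qnorm Q 0 = 0" by (simp add: qnorm_def)

lemma qn_orth: assumes Q: "pos_def_sym Q" and o: "u \<bullet> (Q *v w) = 0"
  shows "qnorm Q u \<le> qnorm Q (u + w)" "qnorm Q w \<le> qnorm Q (u + w)"
proof -
  have e: "qnorm Q (u + w) ^ 2 = qnorm Q u ^ 2 + qnorm Q w ^ 2"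
    using qf_add[OF Q, of u w] o qn_sq[OF Q] by simp
  show "qnorm Q u \<le> qnorm Q (u + w)"
    by (rule power2_le_imp_le) (use e qn_nonneg[OF Q] in auto)
  show "qnorm Q w \<le> qnorm Q (u + w)"
    by (rule power2_le_imp_le) (use e qn_nonneg[OF Q] in auto)
qed

lemma qn_cont: fixes Q :: "real^'n^'n" shows "continuous_on S (qnorm Q)"
  unfolding qnorm_def by (intro continuous_intros)




lemma proj_decomp:
  fixes Es Eu :: "(real^'n) set"
  assumes S: "subspace Es" "subspace Eu" and I: "Es \<inter> Eu = {0}" and su: "s \<in> Es" "u \<in> Eu"
  shows "proj_along Eu Es (s + u) = u" "proj_along Es Eu (s + u) = s"
proof -
  show "proj_along Eu Es (s + u) = u" unfolding proj_along_def
  proof (rule the_equality)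
    show "u \<in> Eu \<and> s + u - u \<in> Es" using su by simp
    fix u' assume a: "u' \<in> Eu \<and> s + u - u' \<in> Es"
    have 1: "u - u' \<in> Eu" using a su(2) S(2) by (simp add: subspace_diff)
    have "(s + u - u') - s \<in> Es" by (rule subspace_diff[OF S(1)]) (use a su in auto)
    then have 2: "u - u' \<in> Es" by (simp add: algebra_simps)
    from 1 2 I have "u - u' = 0" by blast
    then show "u' = u" by simp
  qed
  show "proj_along Es Eu (s + u) = s" unfolding proj_along_def
  proof (rule the_equality)
    show "s \<in> Es \<and> s + u - s \<in> Eu" using su by simp
    fix s' assume a: "s' \<in> Es \<and> s + u - s' \<in> Eu"
    have 1: "s - s' \<in> Es" using a su(1) S(1) by (simp add: subspace_diff)
    have "(s + u - s') - u \<in> Eu" by (rule subspace_diff[OF S(2)]) (use a su in auto)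
    then have 2: "s - s' \<in> Eu" by (simp add: algebra_simps)
    from 1 2 I have "s - s' = 0" by blast
    then show "s' = s" by simp
  qed
qed

lemma proj_props:
  fixes Es Eu :: "(real^'n) set"
  assumes "subspace Es" "subspace Eu" "Es + Eu = UNIV" "Es \<inter> Eu = {0}"
  shows "proj_along Es Eu v \<in> Es \<and> proj_along Eu Es v \<in> Eu \<and>
         v = proj_along Es Eu v + proj_along Eu Es v"
proof -
  have "v \<in> Es + Eu" using assms by simp
  then obtain s u where "v = s + u" "s \<in> Es" "u \<in> Eu" by (rule set_plus_elim)
  then show ?thesis using proj_decomp[OF assms(1,2,4)] by simp
qed

lemma Fpow_deriv:
  assumes "\<forall>x. (F has_derivative DF x) (at x)"
  shows "((F ^^ n) has_derivative dpow DF F n z) (at z)"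
proof (induction n arbitrary: z)
  case 0 then show ?case by (simp add: has_derivative_id id_def)
next
  case (Suc n)
  have "((F \<circ> (F ^^ n)) has_derivative (DF ((F ^^ n) z) \<circ> dpow DF F n z)) (at z)"
    by (rule diff_chain_at[OF Suc.IH]) (use assms in blast)
  then show ?case by (simp only: funpow.simps dpow.simps)
qed

lemma dpow_bound:
  fixes N :: "real^'n \<Rightarrow> real" and g gamh :: real
  assumes E_inv: "\<forall>x. DF x ` E x = E (F x)"
    and gb: "\<forall>x. \<forall>v\<in>E x. N (DF x v) \<le> gamh * N v" and gg: "gamh \<le> g" "0 \<le> g"
    and Nn: "\<forall>v. 0 \<le> N v"
  shows "v \<in> E z \<Longrightarrow> dpow DF F n z v \<in> E ((F ^^ n) z) \<and> N (dpow DF F n z v) \<le> g ^ n * N v"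
proof (induction n)
  case 0 then show ?case by simp
next
  case (Suc n)
  let ?w = "dpow DF F n z v"
  have w: "?w \<in> E ((F ^^ n) z)" "N ?w \<le> g ^ n * N v" using Suc by auto
  have "dpow DF F (Suc n) z v = DF ((F ^^ n) z) ?w" by simp
  moreover have "DF ((F ^^ n) z) ?w \<in> E ((F ^^ Suc n) z)"
  proof -
    have "DF ((F ^^ n) z) ?w \<in> DF ((F ^^ n) z) ` E ((F ^^ n) z)" using w(1) by (rule imageI)
    also have "\<dots> = E (F ((F ^^ n) z))" using E_inv by blast
    finally show ?thesis by simp
  qed
  moreover have "N (DF ((F ^^ n) z) ?w) \<le> g ^ Suc n * N v"
  proof -
    have "N (DF ((F ^^ n) z) ?w) \<le> gamh * N ?w" using gb w(1) by blast
    also have "\<dots> \<le> g * N ?w" using gg Nn by (simp add: mult_right_mono)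
    also have "\<dots> \<le> g * (g ^ n * N v)" using w(2) gg by (simp add: mult_left_mono)
    finally show ?thesis by simp
  qed
  ultimately show ?case by (simp only: dpow.simps comp_apply)
qed




lemma plaque_bound:
  fixes Q :: "real^'n^'n" and F :: "real^'n \<Rightarrow> real^'n" and g :: real
  assumes Q: "pos_def_sym Q"
    and fc: "fol_chart E k c" and uc: "u \<in> fst c" and wp: "w \<in> plaque c u"
    and Fd: "\<And>n z. ((F ^^ n) has_derivative dpow DF F n z) (at z)"
    and db: "\<And>n z v. v \<in> E z \<Longrightarrow> qnorm Q (dpow DF F n z v) \<le> g ^ n * qnorm Q v"
    and g0: "0 \<le> g"
  shows "\<exists>B. \<forall>n. qnorm Q ((F ^^ n) u - (F ^^ n) w) \<le> g ^ n * B"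
proof -
  obtain U h L where c: "c = (U, h, L)" by (metis prod_cases3)
  have U: "open U" "inj_on h U" "convex (h ` U)" "subspace L"
    using fc c by (auto simp: fol_chart_def)
  obtain D where D: "\<And>v. v \<in> h ` U \<Longrightarrow>
          (inv_into U h has_derivative D v) (at v within ((\<lambda>l. v + l) ` L)) \<and>
          inj_on (D v) L \<and> D v ` L = E (inv_into U h v) \<and>
          (\<forall>l\<in>L. continuous_on (h ` U) (\<lambda>w. D w l))"
    using fc c unfolding fol_chart_def by auto
  have uU: "u \<in> U" using uc c by simp
  have wU: "w \<in> U" and dL: "h w - h u \<in> L" using wp c by (auto simp: plaque_def)
  define d where "d = h w - h u"
  define p where "p t = h u + t *\<^sub>R d" for t :: real
  define \<gamma> where "\<gamma> t = inv_into U h (p t)" for t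
  have pU: "p t \<in> h ` U" if "t \<in> {0..1}" for t
  proof -
    have "(1 - t) *\<^sub>R h u + t *\<^sub>R h w \<in> h ` U"
      by (rule convexD[OF U(3)]) (use that uU wU in auto)
    moreover have "(1 - t) *\<^sub>R h u + t *\<^sub>R h w = p t" by (simp add: p_def d_def algebra_simps)
    ultimately show ?thesis by simp
  qed
  have g0': "\<gamma> 0 = u" "\<gamma> 1 = w" using U(2) uU wU by (auto simp: \<gamma>_def p_def d_def)
  define Vd where "Vd t = D (p t) d" for t
  have Vd_cont: "continuous_on {0..1} Vd"
  proof -
    have "continuous_on (h ` U) (\<lambda>w. D w d)" using D[OF pU[of 0]] dL d_def by auto
    moreover have "continuous_on {0..1} p" unfolding p_def by (intro continuous_intros)
    ultimately show ?thesis unfolding Vd_def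
      by (rule continuous_on_compose2) (use pU in auto)
  qed
  have "continuous_on {0..1} (\<lambda>t. qnorm Q (Vd t))"
    by (rule continuous_on_compose2[OF qn_cont Vd_cont]) auto
  then obtain t0 where "t0 \<in> {0..1::real}" "\<forall>t\<in>{0..1}. qnorm Q (Vd t) \<le> qnorm Q (Vd t0)"
    using continuous_attains_sup[OF compact_Icc _ \<open>continuous_on {0..1} (\<lambda>t. qnorm Q (Vd t))\<close>] by auto
  then obtain Bv where Bv: "\<And>t. t \<in> {0..1} \<Longrightarrow> qnorm Q (Vd t) \<le> Bv" "0 \<le> Bv"
    using qn_nonneg[OF Q] by blast
  have VdE: "Vd t \<in> E (\<gamma> t)" if "t \<in> {0..1}" for t
    using D[OF pU[OF that]] dL unfolding Vd_def \<gamma>_def d_def by blast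
  have gder: "(\<gamma> has_derivative (\<lambda>s. D (p t) (s *\<^sub>R d))) (at t within {0..1})"
    if t: "t \<in> {0..1}" for t
  proof -
    have pd: "(p has_derivative (\<lambda>s. s *\<^sub>R d)) (at t within {0..1})"
      unfolding p_def by (auto intro!: derivative_eq_intros)
    have sub: "p ` {0..1} \<subseteq> (\<lambda>l. p t + l) ` L"
    proof
      fix y assume "y \<in> p ` {0..1}"
      then obtain s where y: "y = p s" by auto
      have "(s - t) *\<^sub>R d \<in> L" using U(4) dL d_def by (simp add: subspace_scale)
      moreover have "y = p t + (s - t) *\<^sub>R d" using y by (simp add: p_def algebra_simps)
      ultimately show "y \<in> (\<lambda>l. p t + l) ` L" by blast
    qed
    have id: "(inv_into U h has_derivative D (p t)) (at (p t) within (p ` {0..1}))"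
      using D[OF pU[OF t]] has_derivative_subset sub by blast
    have "((inv_into U h \<circ> p) has_derivative (D (p t) \<circ> (\<lambda>s. s *\<^sub>R d))) (at t within {0..1})"
      by (rule diff_chain_within[OF pd id])
    moreover have "\<gamma> = (\<lambda>t. inv_into U h (p t))" by (rule ext) (simp add: \<gamma>_def)
    ultimately show ?thesis by (simp add: comp_def)
  qed
  have main: "qnorm Q ((F ^^ n) w - (F ^^ n) u) \<le> g ^ n * Bv" for n
  proof -
    define \<Phi> where "\<Phi> t = (F ^^ n) (\<gamma> t)" for t
    define DD where "DD = \<Phi> 1 - \<Phi> 0"
    define \<phi> where "\<phi> t = \<Phi> t \<bullet> (Q *v DD)" for t
    have Pder: "(\<Phi> has_derivative (\<lambda>s. dpow DF F n (\<gamma> t) (D (p t) (s *\<^sub>R d)))) (at t within {0..1})"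
      if t: "t \<in> {0..1}" for t
    proof -
      have "(((F ^^ n) \<circ> \<gamma>) has_derivative (dpow DF F n (\<gamma> t) \<circ> (\<lambda>s. D (p t) (s *\<^sub>R d)))) (at t within {0..1})"
        by (rule diff_chain_within[OF gder[OF t]]) (rule has_derivative_at_withinI[OF Fd])
      moreover have "\<Phi> = (\<lambda>t. (F ^^ n) (\<gamma> t))" by (rule ext) (simp add: \<Phi>_def)
      ultimately show ?thesis by (simp add: comp_def)
    qed
    have phider: "(\<phi> has_derivative (\<lambda>s. dpow DF F n (\<gamma> t) (D (p t) (s *\<^sub>R d)) \<bullet> (Q *v DD))) (at t within {0..1})"
      if t: "t \<in> {0..1}" for t
    proof -
      have "\<phi> = (\<lambda>t. \<Phi> t \<bullet> (Q *v DD))" by (rule ext) (simp add: \<phi>_def)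
      then show ?thesis by (simp add: bounded_linear.has_derivative[OF bounded_linear_inner_left Pder[OF t]])
    qed
    have cont: "continuous_on {0..1} \<phi>"
      using phider has_derivative_continuous continuous_on_eq_continuous_within by blast
    have derat: "(\<phi> has_derivative (\<lambda>s. dpow DF F n (\<gamma> t) (D (p t) (s *\<^sub>R d)) \<bullet> (Q *v DD))) (at t)"
      if "0 < t" "t < 1" for t
    proof -
      have "at t within {0..1} = at t" by (rule at_within_interior) (use that in simp)
      then show ?thesis using phider[of t] that by simp
    qed
    obtain t where t: "t \<in> {0<..<1}"
      and le: "norm (\<phi> 1 - \<phi> 0) \<le> norm (dpow DF F n (\<gamma> t) (D (p t) ((1 - 0) *\<^sub>R d)) \<bullet> (Q *v DD))"
      using mvt_general[of 0 1 \<phi>, OF _ cont derat] by auto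
    have t01: "t \<in> {0..1}" using t by auto
    have "\<phi> 1 - \<phi> 0 = DD \<bullet> (Q *v DD)" by (simp add: \<phi>_def DD_def inner_diff_left)
    also have "\<dots> = qnorm Q DD ^ 2" using qn_sq[OF Q] by simp
    finally have e1: "norm (\<phi> 1 - \<phi> 0) = qnorm Q DD ^ 2" by simp
    have "norm (dpow DF F n (\<gamma> t) (D (p t) ((1 - 0) *\<^sub>R d)) \<bullet> (Q *v DD))
        = \<bar>dpow DF F n (\<gamma> t) (Vd t) \<bullet> (Q *v DD)\<bar>" by (simp add: Vd_def)
    also have "\<dots> \<le> qnorm Q (dpow DF F n (\<gamma> t) (Vd t)) * qnorm Q DD" by (rule qn_CS[OF Q])
    also have "\<dots> \<le> (g ^ n * Bv) * qnorm Q DD"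
    proof (rule mult_right_mono)
      have "qnorm Q (dpow DF F n (\<gamma> t) (Vd t)) \<le> g ^ n * qnorm Q (Vd t)" by (rule db[OF VdE[OF t01]])
      also have "\<dots> \<le> g ^ n * Bv" using Bv(1)[OF t01] g0 by (simp add: mult_left_mono)
      finally show "qnorm Q (dpow DF F n (\<gamma> t) (Vd t)) \<le> g ^ n * Bv" .
    qed (rule qn_nonneg[OF Q])
    finally have "qnorm Q DD ^ 2 \<le> (g ^ n * Bv) * qnorm Q DD" using le e1 by simp
    then have "qnorm Q DD \<le> g ^ n * Bv"
      using qn_nonneg[OF Q, of DD] Bv(2) g0
      by (cases "qnorm Q DD = 0") (auto simp: power2_eq_square)
    then show ?thesis by (simp add: DD_def \<Phi>_def g0')
  qed
  show ?thesis using main qn_diff_comm by metis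
qed




lemma leaf_bound:
  fixes Q :: "real^'n^'n" and F :: "real^'n \<Rightarrow> real^'n" and g :: real
  assumes Q: "pos_def_sym Q"
    and fol: "foliation_tangent E k W"
    and Fd: "\<And>n z. ((F ^^ n) has_derivative dpow DF F n z) (at z)"
    and db: "\<And>n z v. v \<in> E z \<Longrightarrow> qnorm Q (dpow DF F n z v) \<le> g ^ n * qnorm Q v"
    and g0: "0 \<le> g"
    and y: "y \<in> W x"
  shows "\<exists>B. \<forall>n. qnorm Q ((F ^^ n) x - (F ^^ n) y) \<le> g ^ n * B"
proof -
  obtain \<A> where A1: "\<forall>c\<in>\<A>. fol_chart E k c"
    and A4: "\<forall>x. W x = \<Inter>{S. x \<in> S \<and> (\<forall>c\<in>\<A>. \<forall>u\<in>S \<inter> fst c. plaque c u \<subseteq> S)}"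
    using fol unfolding foliation_tangent_def by blast
  define S where "S = {y. \<exists>B. \<forall>n. qnorm Q ((F ^^ n) x - (F ^^ n) y) \<le> g ^ n * B}"
  have xS: "x \<in> S" unfolding S_def by (rule CollectI, rule exI[of _ 0]) simp
  have clo: "\<forall>c\<in>\<A>. \<forall>u\<in>S \<inter> fst c. plaque c u \<subseteq> S"
  proof (intro ballI subsetI)
    fix c u w assume c: "c \<in> \<A>" and u: "u \<in> S \<inter> fst c" and w: "w \<in> plaque c u"
    obtain B1 where B1: "\<And>n. qnorm Q ((F ^^ n) x - (F ^^ n) u) \<le> g ^ n * B1"
      using u unfolding S_def by blast
    obtain B2 where B2: "\<And>n. qnorm Q ((F ^^ n) u - (F ^^ n) w) \<le> g ^ n * B2"
      using plaque_bound[OF Q A1[rule_format, OF c] _ w Fd db g0] u by blast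
    have "qnorm Q ((F ^^ n) x - (F ^^ n) w) \<le> g ^ n * (B1 + B2)" for n
    proof -
      have "(F ^^ n) x - (F ^^ n) w = ((F ^^ n) x - (F ^^ n) u) + ((F ^^ n) u - (F ^^ n) w)" by simp
      then have "qnorm Q ((F ^^ n) x - (F ^^ n) w) \<le> qnorm Q ((F ^^ n) x - (F ^^ n) u) + qnorm Q ((F ^^ n) u - (F ^^ n) w)"
        using qn_triangle[OF Q] by metis
      also have "\<dots> \<le> g ^ n * (B1 + B2)" using B1[of n] B2[of n] by (simp add: distrib_left)
      finally show ?thesis .
    qed
    then show "w \<in> S" unfolding S_def by blast
  qed
  have "W x \<subseteq> S" using A4 xS clo by blast
  then show ?thesis using y S_def by blast
qed

lemma per_bounded:
  fixes Q :: "real^'n^'n" and G :: "real^'n \<Rightarrow> real^'n"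
  assumes Q: "pos_def_sym Q" and cG: "continuous_on UNIV G"
    and per: "\<forall>z k. int_vec k \<longrightarrow> G (z + k) = G z"
  shows "\<exists>K\<ge>0. \<forall>z. qnorm Q (G z) \<le> K"
proof -
  have c: "continuous_on (cbox 0 1) (\<lambda>z. qnorm Q (G z))"
    by (rule continuous_on_compose2[OF qn_cont continuous_on_subset[OF cG]]) auto
  have ne: "cbox 0 (1::real^'n) \<noteq> {}" proof -
    have "0 \<in> cbox 0 (1::real^'n)" by (simp add: mem_box_cart)
    then show ?thesis by blast
  qed
  obtain z0 where z0: "\<forall>z\<in>cbox 0 1. qnorm Q (G z) \<le> qnorm Q (G z0)"
    using continuous_attains_sup[OF compact_cbox ne c] by blast
  have "qnorm Q (G z) \<le> qnorm Q (G z0)" for z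
  proof -
    define r where "r = (\<chi> i. frac (z $ i))"
    define k where "k = (\<chi> i. (of_int \<lfloor>z $ i\<rfloor> :: real))"
    have zk: "z = r + k" by (simp add: vec_eq_iff r_def k_def frac_def)
    have "int_vec k" by (simp add: int_vec_def k_def)
    then have "G z = G r" using per zk by simp
    moreover have "r \<in> cbox 0 1" by (simp add: mem_box_cart r_def frac_lt_1 less_imp_le)
    ultimately show ?thesis using z0 by simp
  qed
  moreover have "0 \<le> qnorm Q (G z0)" by (rule qn_nonneg[OF Q])
  ultimately show ?thesis by blast
qed




theorem mainTheorem8:
  fixes A :: "real^'n^'n" and Q :: "real^'n^'n"
    and Es Eu :: "(real^'n) set" and lam gam :: real
    and F :: "real^'n \<Rightarrow> real^'n" and DF :: "real^'n \<Rightarrow> real^'n \<Rightarrow> real^'n"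
    and E Fd :: "real^'n \<Rightarrow> (real^'n) set"
    and C nu lamh gamh :: real
    and WE :: "real^'n \<Rightarrow> (real^'n) set"
  defines "N \<equiv> qnorm Q"
  (* A linear Anosov automorphism of T^d: A in GL(d,Z) with hyperbolic splitting *)
  assumes A_int: "\<forall>i j. A $ i $ j \<in> \<int>" and A_det: "\<bar>det A\<bar> = 1"
    and Es_sub: "subspace Es" and Eu_sub: "subspace Eu"
    and split_A: "Es + Eu = UNIV" "Es \<inter> Eu = {0}"
    and inv_A: "(\<lambda>v. A *v v) ` Es = Es" "(\<lambda>v. A *v v) ` Eu = Eu"
  (* adapted norm (inner product) with E^s_A orthogonal to E^u_A *)
    and Q_pd: "pos_def_sym Q"
    and orth: "\<forall>u\<in>Es. \<forall>w\<in>Eu. u \<bullet> (Q *v w) = 0"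
    and lam_bd: "\<forall>v\<in>Es. N (A *v v) \<le> lam * N v" and lam_lt: "lam < 1"
    and gam_bd: "\<forall>v\<in>Eu. N (A *v v) \<ge> gam * N v" and gam_gt: "1 < gam"
  (* F is the lift of a C^1 diffeomorphism f of T^d homotopic to A *)
    and F_deriv: "\<forall>x. (F has_derivative DF x) (at x)"
    and DF_cont: "\<forall>v. continuous_on UNIV (\<lambda>x. DF x v)"
    and F_bij: "bij F"
    and Finv_C1: "\<exists>DG. (\<forall>x. (inv F has_derivative DG x) (at x)) \<and> (\<forall>v. continuous_on UNIV (\<lambda>x. DG x v))"
    and F_equiv: "\<forall>x k. int_vec k \<longrightarrow> F (x + k) = F x + A *v k"
  (* dominated splitting E + Fd (lifted from the torus) *)
    and E_sub: "\<forall>x. subspace (E x)" and Fd_sub: "\<forall>x. subspace (Fd x)"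
    and split_f: "\<forall>x. E x + Fd x = UNIV" "\<forall>x. E x \<inter> Fd x = {0}"
    and dimE: "\<forall>x. dim (E x) = dim Es" and dimF: "\<forall>x. dim (Fd x) = dim Eu"
    and E_per: "\<forall>x k. int_vec k \<longrightarrow> E (x + k) = E x"
    and Fd_per: "\<forall>x k. int_vec k \<longrightarrow> Fd (x + k) = Fd x"
    and E_cont: "continuous_distribution E" and Fd_cont: "continuous_distribution Fd"
    and E_inv: "\<forall>x. DF x ` E x = E (F x)" and Fd_inv: "\<forall>x. DF x ` Fd x = Fd (F x)"
    and C_pos: "C > 0" and nu: "0 < nu" "nu < 1"
    and dominated: "\<forall>n x. \<forall>u\<in>E x. \<forall>w\<in>Fd x. w \<noteq> 0 \<longrightarrow>
          N (dpow DF F n x u) * N w \<le> C * nu ^ n * N u * N (dpow DF F n x w)"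
    and gamh_bd: "\<forall>x. \<forall>v\<in>E x. N (DF x v) \<le> gamh * N v" and gamh_lt: "gamh < gam"
    and lamh_bd: "\<forall>x. \<forall>v\<in>Fd x. N (DF x v) \<ge> lamh * N v" and lamh_gt: "lamh > lam"
  (* E and F integrable; WE is the lift of the foliation tangent to E *)
    and WE_fol: "foliation_tangent E (dim Es) WE" and WE_per: "periodic_leaves WE"
    and F_integrable: "\<exists>WF. foliation_tangent Fd (dim Eu) WF \<and> periodic_leaves WF"
  shows "\<forall>\<epsilon>>0. \<exists>M>0. \<forall>x. \<forall>y\<in>WE x. N (x - y) > M \<longrightarrow>
           N (proj_along Eu Es (x - y)) < \<epsilon> * N (proj_along Es Eu (x - y))"
proof -
  have Nn: "\<forall>v. 0 \<le> N v" using qn_nonneg[OF Q_pd] N_def by simp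
  define g where "g = max gamh 1"
  have g: "gamh \<le> g" "0 < g" "g < gam" using gamh_lt gam_gt by (auto simp: g_def)
  have Fd: "\<And>n z. ((F ^^ n) has_derivative dpow DF F n z) (at z)"
    using Fpow_deriv F_deriv by blast
  have db: "\<And>n z v. v \<in> E z \<Longrightarrow> qnorm Q (dpow DF F n z v) \<le> g ^ n * qnorm Q v"
    using dpow_bound[of DF E F N gamh g] E_inv gamh_bd g Nn N_def by auto
  define G where "G z = F z - A *v z" for z
  have cF: "continuous_on UNIV F"
    using F_deriv has_derivative_continuous continuous_at_imp_continuous_on by blast
  have cG: "continuous_on UNIV G"
  proof -
    have "G = (\<lambda>z. F z - A *v z)" by (rule ext) (simp add: G_def)
    moreover have "continuous_on UNIV (\<lambda>z. F z - A *v z)"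
      by (intro continuous_intros cF)
    ultimately show ?thesis by simp
  qed
  have perG: "\<forall>z k. int_vec k \<longrightarrow> G (z + k) = G z"
    using F_equiv by (simp add: G_def matrix_vector_right_distrib)
  obtain K where K: "K \<ge> 0" "\<And>z. N (G z) \<le> K"
    using per_bounded[OF Q_pd cG perG] N_def by blast
  define Bc where "Bc = 2 * K / (gam - 1)"
  have Bc0: "Bc \<ge> 0" using K gam_gt by (simp add: Bc_def)
  define pu where "pu = proj_along Eu Es"
  define ps where "ps = proj_along Es Eu"
  have pp: "ps v \<in> Es \<and> pu v \<in> Eu \<and> v = ps v + pu v" for v
    using proj_props[OF Es_sub Eu_sub split_A] ps_def pu_def by blast
  have pd: "pu (s + u) = u" "ps (s + u) = s" if "s \<in> Es" "u \<in> Eu" for s u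
    using proj_decomp[OF Es_sub Eu_sub split_A(2) that] pu_def ps_def by auto
  have Npu: "N (pu v) \<le> N v" and Nps: "N (ps v) \<le> N v" for v
  proof -
    have o: "ps v \<bullet> (Q *v pu v) = 0" using orth pp by blast
    show "N (pu v) \<le> N v" using qn_orth(2)[OF Q_pd o] pp[of v] N_def by simp
    show "N (ps v) \<le> N v" using qn_orth(1)[OF Q_pd o] pp[of v] N_def by simp
  qed
  have pu_add: "pu (a + b) = pu a + pu b" for a b
  proof -
    have "a + b = (ps a + ps b) + (pu a + pu b)" using pp[of a] pp[of b] by (simp add: algebra_simps)
    moreover have "ps a + ps b \<in> Es" using pp Es_sub by (simp add: subspace_add)
    moreover have "pu a + pu b \<in> Eu" using pp Eu_sub by (simp add: subspace_add)
    ultimately show ?thesis using pd by metis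
  qed
  have pu_A: "pu (A *v v) = A *v pu v" for v
  proof -
    have "A *v v = A *v ps v + A *v pu v" using pp[of v] by (metis matrix_vector_right_distrib)
    moreover have "A *v ps v \<in> Es" using inv_A(1) pp by blast
    moreover have "A *v pu v \<in> Eu" using inv_A(2) pp by blast
    ultimately show ?thesis using pd by metis
  qed
  have Ntri: "N (a + b) \<le> N a + N b" for a b using qn_triangle[OF Q_pd] N_def by simp
  have Nminus: "N (- a) = N a" for a using qn_minus N_def by simp
  have key: "N (pu (x - y)) \<le> Bc" if y: "y \<in> WE x" for x y
  proof (rule ccontr)
    assume "\<not> N (pu (x - y)) \<le> Bc"
    then have a0: "N (pu (x - y)) - Bc > 0" by simp
    obtain B where B: "\<And>n. N ((F ^^ n) x - (F ^^ n) y) \<le> g ^ n * B"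
      using leaf_bound[OF Q_pd WE_fol Fd db _ y] g N_def by auto
    define Dn where "Dn n = (F ^^ n) x - (F ^^ n) y" for n
    have grow: "N (pu (Dn n)) - Bc \<ge> gam ^ n * (N (pu (x - y)) - Bc)" for n
    proof (induction n)
      case 0 then show ?case by (simp add: Dn_def)
    next
      case (Suc n)
      define e where "e = G ((F ^^ n) x) - G ((F ^^ n) y)"
      have DS: "Dn (Suc n) = A *v Dn n + e"
        by (simp add: Dn_def e_def G_def matrix_vector_mult_diff_distrib)
      have Ne: "N e \<le> 2 * K"
      proof -
        have "N e \<le> N (G ((F ^^ n) x)) + N (- G ((F ^^ n) y))" using Ntri[of "G ((F ^^ n) x)" "- G ((F ^^ n) y)"] by (simp add: e_def)
        then show ?thesis using K(2)[of "(F ^^ n) x"] K(2)[of "(F ^^ n) y"] Nminus by simp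
      qed
      have "pu (Dn (Suc n)) = A *v pu (Dn n) + pu e" using DS pu_add pu_A by simp
      then have "A *v pu (Dn n) = pu (Dn (Suc n)) + - pu e" by simp
      then have "N (A *v pu (Dn n)) \<le> N (pu (Dn (Suc n))) + N (pu e)" using Ntri Nminus by metis
      moreover have "gam * N (pu (Dn n)) \<le> N (A *v pu (Dn n))" using gam_bd pp by blast
      moreover have "N (pu e) \<le> 2 * K" using Npu[of e] Ne by simp
      ultimately have "N (pu (Dn (Suc n))) \<ge> gam * N (pu (Dn n)) - 2 * K" by simp
      moreover have "(gam - 1) * Bc = 2 * K" using gam_gt by (simp add: Bc_def)
      ultimately have "N (pu (Dn (Suc n))) - Bc \<ge> gam * (N (pu (Dn n)) - Bc)" by (simp add: algebra_simps)
      moreover have "gam * (N (pu (Dn n)) - Bc) \<ge> gam * (gam ^ n * (N (pu (x - y)) - Bc))"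
        using Suc gam_gt by (simp add: mult_left_mono)
      ultimately show ?case by simp
    qed
    have up: "gam ^ n * (N (pu (x - y)) - Bc) \<le> g ^ n * B" for n
    proof -
      have "gam ^ n * (N (pu (x - y)) - Bc) \<le> N (pu (Dn n))" using grow[of n] Bc0 by simp
      also have "\<dots> \<le> N (Dn n)" by (rule Npu)
      also have "\<dots> \<le> g ^ n * B" using B by (simp add: Dn_def)
      finally show ?thesis .
    qed
    have gt1: "gam / g > 1" using g by simp
    obtain n where n: "B / (N (pu (x - y)) - Bc) < (gam / g) ^ n"
      using real_arch_pow[OF gt1] by blast
    have "(gam / g) ^ n * (N (pu (x - y)) - Bc) \<le> B"
    proof -
      have "(gam / g) ^ n * (N (pu (x - y)) - Bc) = (gam ^ n * (N (pu (x - y)) - Bc)) / g ^ n"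
        by (simp add: power_divide)
      also have "\<dots> \<le> B" using up[of n] g by (simp add: pos_divide_le_eq mult.commute)
      finally show ?thesis .
    qed
    then have "(gam / g) ^ n \<le> B / (N (pu (x - y)) - Bc)" using a0 by (simp add: le_divide_eq)
    then show False using n by simp
  qed
  show ?thesis
  proof (intro allI impI)
    fix \<epsilon> :: real assume ep: "\<epsilon> > 0"
    define M where "M = Bc + Bc / \<epsilon> + 1"
    have M0: "M > 0"
    proof -
      have "Bc / \<epsilon> \<ge> 0" using Bc0 ep by simp
      then show ?thesis using Bc0 by (simp add: M_def)
    qed
    have "\<forall>x. \<forall>y\<in>WE x. N (x - y) > M \<longrightarrow> N (pu (x - y)) < \<epsilon> * N (ps (x - y))"
    proof (intro allI ballI impI)
      fix x y assume y: "y \<in> WE x" and gt: "N (x - y) > M"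
      have ku: "N (pu (x - y)) \<le> Bc" by (rule key[OF y])
      have "N (x - y) \<le> N (ps (x - y)) + N (pu (x - y))" using Ntri pp by metis
      then have "N (ps (x - y)) > Bc / \<epsilon>" using gt ku by (simp add: M_def)
      then have "\<epsilon> * N (ps (x - y)) > Bc" using ep by (simp add: pos_divide_less_eq mult.commute)
      then show "N (pu (x - y)) < \<epsilon> * N (ps (x - y))" using ku by simp
    qed
    then show "\<exists>M>0. \<forall>x. \<forall>y\<in>WE x. N (x - y) > M \<longrightarrow>
           N (proj_along Eu Es (x - y)) < \<epsilon> * N (proj_along Es Eu (x - y))"
      using M0 pu_def ps_def by blast
  qed
qed


end
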